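(* For every integer $q\ge1$, the dilated tetrahedron $2\Delta'(1,q)$ has a regular unimodular triangulation with standard boundary (with respect to the lattice $\Lambda_{1,q}$).
   Context: $\Lambda_{1,q}=q\mathbb{Z}\times q\mathbb{Z}\times\mathbb{Z}+\mathbb{Z}(p',1,0)$ with $p'=(-1)\bmod q$, and $\Delta'(1,q)=\operatorname{conv}\{(0,0,0),(q,0,0),(0,0,1),(0,q,1)\}$, an empty lattice tetrahedron with respect to $\Lambda_{1,q}$. Triangulations have vertices in the lattice; a tetrahedron is unimodular if its vertices form an affine basis of the lattice. A triangulation of a polytope $P$ is regular if its tetrahedra are exactly the domains of linearity of some convex piecewise-linear function $P\to\mathbb{R}$. A triangulation of $k\Delta$ ($\Delta$ an empty lattice tetrahedron) has standard boundary if every edge of it contained in the boundary of $k\Delta$ is parallel to an edge of $\Delta$. *)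

theory Defs
  imports "HOL-Analysis.Analysis"
begin

definition pt :: "real \<Rightarrow> real \<Rightarrow> real \<Rightarrow> real^3" where
  "pt x y z = vector [x, y, z]"

text \<open>The lattice Lambda_{1,q} = qZ x qZ x Z + Z (p',1,0), p' = (-1) mod q.\<close>
definition Lambda1 :: "nat \<Rightarrow> (real^3) set" where
  "Lambda1 q = (let p' = (-1::int) mod int q in
     {pt (of_int (int q * a + k * p')) (of_int (int q * b + k)) (of_int c) | a b c k :: int. True})"

definition DeltaVerts :: "nat \<Rightarrow> (real^3) set" where
  "DeltaVerts q = {pt 0 0 0, pt (real q) 0 0, pt 0 0 1, pt 0 (real q) 1}"

definition Delta' :: "nat \<Rightarrow> (real^3) set" where
  "Delta' q = convex hull (DeltaVerts q)"

definition lattice_triangulation :: "(real^3) set \<Rightarrow> (real^3) set \<Rightarrow> (real^3) set set \<Rightarrow> bool" where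
  "lattice_triangulation L P \<T> \<longleftrightarrow>
     finite \<T> \<and>
     (\<forall>T\<in>\<T>. card T = 4 \<and> T \<subseteq> L \<and> \<not> affine_dependent T) \<and>
     \<Union> ((\<lambda>T. convex hull T) ` \<T>) = P \<and>
     (\<forall>T\<in>\<T>. \<forall>T'\<in>\<T>. convex hull T \<inter> convex hull T' = convex hull (T \<inter> T'))"

definition unimodular :: "(real^3) set \<Rightarrow> (real^3) set \<Rightarrow> bool" where
  "unimodular L T \<longleftrightarrow> finite T \<and> T \<subseteq> L \<and> \<not> affine_dependent T \<and>
     (\<forall>x\<in>L. \<exists>c :: real^3 \<Rightarrow> int. sum c T = 1 \<and> x = (\<Sum>v\<in>T. of_int (c v) *\<^sub>R v))"

text \<open>Regular: the cells are exactly the domains of linearity of a convex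
  piecewise-linear function on P, i.e. f is affine on each cell, with pairwise
  distinct affine functions on distinct cells.\<close>
definition regular_triangulation :: "(real^3) set \<Rightarrow> (real^3) set set \<Rightarrow> bool" where
  "regular_triangulation P \<T> \<longleftrightarrow>
     (\<exists>f :: real^3 \<Rightarrow> real. \<exists>a :: (real^3) set \<Rightarrow> real^3. \<exists>b :: (real^3) set \<Rightarrow> real.
        convex_on P f \<and>
        (\<forall>T\<in>\<T>. \<forall>x\<in>convex hull T. f x = a T \<bullet> x + b T) \<and>
        (\<forall>T\<in>\<T>. \<forall>T'\<in>\<T>. T \<noteq> T' \<longrightarrow> (a T, b T) \<noteq> (a T', b T')))"

definition standard_boundary :: "(real^3) set \<Rightarrow> (real^3) set \<Rightarrow> (real^3) set set \<Rightarrow> bool" where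
  "standard_boundary V P \<T> \<longleftrightarrow>
     (\<forall>T\<in>\<T>. \<forall>u\<in>T. \<forall>v\<in>T. u \<noteq> v \<and> closed_segment u v \<subseteq> frontier P \<longrightarrow>
        (\<exists>w1\<in>V. \<exists>w2\<in>V. w1 \<noteq> w2 \<and> (\<exists>c::real. v - u = c *\<^sub>R (w2 - w1))))"

end

theory Submission
  imports Defs
begin


lemma aff_comb:
  fixes n :: "real^3"
  assumes "sum u T = 1"
  shows "n \<bullet> (\<Sum>w\<in>T. u w *\<^sub>R w) + e = (\<Sum>w\<in>T. u w * (n \<bullet> w + e))"
proof -
  have "(\<Sum>w\<in>T. u w * (n \<bullet> w + e)) = (\<Sum>w\<in>T. u w * (n \<bullet> w)) + (\<Sum>w\<in>T. u w) * e"
    by (simp add: algebra_simps sum.distrib sum_distrib_right sum_distrib_left)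
  then show ?thesis using assms by (simp add: inner_sum_right)
qed

lemma GL:
  fixes \<T> :: "(real^3) set set" and V :: "(real^3) set" and h :: "real^3 \<Rightarrow> real"
  assumes fin: "finite \<T>" "\<T> \<noteq> {}"
    and cells: "\<And>T. T \<in> \<T> \<Longrightarrow> finite T \<and> card T = 4 \<and> T \<subseteq> V"
    and good: "\<And>T. T \<in> \<T> \<Longrightarrow> \<exists>n e. (\<forall>w\<in>T. n \<bullet> w + e = h w) \<and> (\<forall>v\<in>V-T. n \<bullet> v + e < h v)"
    and cvx: "convex P"
  shows "(\<forall>T\<in>\<T>. \<forall>T'\<in>\<T>. convex hull T \<inter> convex hull T' = convex hull (T \<inter> T'))
      \<and> regular_triangulation P \<T>"
proof -
  have ex: "\<forall>T\<in>\<T>. \<exists>ne. (\<forall>w\<in>T. fst ne \<bullet> w + snd ne = h w) \<and> (\<forall>v\<in>V-T. fst ne \<bullet> v + snd ne < h v)"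
    using good by force
  obtain NE where NE: "\<And>T. T \<in> \<T> \<Longrightarrow> (\<forall>w\<in>T. fst (NE T) \<bullet> w + snd (NE T) = h w) \<and>
       (\<forall>v\<in>V-T. fst (NE T) \<bullet> v + snd (NE T) < h v)"
    using bchoice[OF ex] by blast
  define l where "l T x = fst (NE T) \<bullet> x + snd (NE T)" for T x
  have le: "l T' w \<le> h w" if "T' \<in> \<T>" "w \<in> V" for T' w
    using NE[OF that(1)] that(2) unfolding l_def by (cases "w \<in> T'") (auto intro: less_imp_le)
  have eq: "l T w = h w" if "T \<in> \<T>" "w \<in> T" for T w
    using NE[OF that(1)] that(2) unfolding l_def by auto
  have lt: "l T' w < h w" if "T' \<in> \<T>" "w \<in> V" "w \<notin> T'" for T' w
    using NE[OF that(1)] that(2,3) unfolding l_def by auto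
  have comb: "l T (\<Sum>w\<in>S. u w *\<^sub>R w) = (\<Sum>w\<in>S. u w * l T w)" if "sum u S = 1" for T S u
    unfolding l_def using aff_comb[OF that] by simp
  have key: "l T' x \<le> l T x" if T: "T \<in> \<T>" "T' \<in> \<T>" and x: "x \<in> convex hull T" for T T' x
  proof -
    have fT: "finite T" "T \<subseteq> V" using cells[OF T(1)] by auto
    obtain u where u: "\<forall>w\<in>T. 0 \<le> u w" "sum u T = 1" "(\<Sum>w\<in>T. u w *\<^sub>R w) = x"
      using x unfolding convex_hull_finite[OF fT(1)] by auto
    have "l T' x = (\<Sum>w\<in>T. u w * l T' w)" using comb[OF u(2)] u(3) by simp
    also have "\<dots> \<le> (\<Sum>w\<in>T. u w * l T w)"
      by (rule sum_mono) (use u(1) fT le[OF T(2)] eq[OF T(1)] in \<open>auto intro: mult_left_mono\<close>)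
    also have "\<dots> = l T x" using comb[OF u(2)] u(3) by simp
    finally show ?thesis .
  qed
  have f2f: "convex hull T \<inter> convex hull T' = convex hull (T \<inter> T')"
    if T: "T \<in> \<T>" "T' \<in> \<T>" for T T'
  proof
    show "convex hull (T \<inter> T') \<subseteq> convex hull T \<inter> convex hull T'"
      by (simp add: hull_mono)
    show "convex hull T \<inter> convex hull T' \<subseteq> convex hull (T \<inter> T')"
    proof
      fix x assume x: "x \<in> convex hull T \<inter> convex hull T'"
      have fT: "finite T" "T \<subseteq> V" using cells[OF T(1)] by auto
      obtain u where u: "\<forall>w\<in>T. 0 \<le> u w" "sum u T = 1" "(\<Sum>w\<in>T. u w *\<^sub>R w) = x"
        using x unfolding convex_hull_finite[OF fT(1)] by auto
      have c1: "l T' x \<le> l T x" using key[OF T] x by blast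
      have c2: "l T x \<le> l T' x" using key[OF T(2) T(1)] x by blast
      have d1: "(\<Sum>w\<in>T. u w * l T w) = l T x" using comb[OF u(2), of T] u(3) by simp
      have d2: "(\<Sum>w\<in>T. u w * l T' w) = l T' x" using comb[OF u(2), of T'] u(3) by simp
      have "(\<Sum>w\<in>T. u w * (l T w - l T' w)) = (\<Sum>w\<in>T. u w * l T w) - (\<Sum>w\<in>T. u w * l T' w)"
        by (simp add: right_diff_distrib sum_subtractf)
      also have "\<dots> = 0" using d1 d2 c1 c2 by linarith
      finally have s0: "(\<Sum>w\<in>T. u w * (l T w - l T' w)) = 0" .
      have nn: "0 \<le> u w * (l T w - l T' w)" if w: "w \<in> T" for w
      proof -
        have "w \<in> V" using fT w by blast
        then have "l T' w \<le> h w" by (rule le[OF T(2)])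
        moreover have "l T w = h w" by (rule eq[OF T(1) w])
        ultimately show ?thesis using u(1) w by simp
      qed
      have z: "\<forall>w\<in>T. u w * (l T w - l T' w) = 0"
        using sum_nonneg_eq_0_iff[OF fT(1), of "\<lambda>w. u w * (l T w - l T' w)"] nn s0 by blast
      have u0: "u w = 0" if w: "w \<in> T" "w \<notin> T'" for w
      proof -
        have "w \<in> V" using fT w by blast
        then have "l T' w < h w" by (rule lt[OF T(2) _ w(2)])
        moreover have "l T w = h w" by (rule eq[OF T(1) w(1)])
        moreover have "u w * (l T w - l T' w) = 0" using z w by blast
        ultimately show ?thesis by simp
      qed
      have s1: "sum u (T \<inter> T') = 1"
        using u(2) sum.mono_neutral_right[OF fT(1), of "T \<inter> T'" u] u0 by auto
      have s2: "(\<Sum>w\<in>T \<inter> T'. u w *\<^sub>R w) = x"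
        using u(3) sum.mono_neutral_right[OF fT(1), of "T \<inter> T'" "\<lambda>w. u w *\<^sub>R w"] u0 by auto
      show "x \<in> convex hull (T \<inter> T')"
        unfolding convex_hull_finite[OF finite_Int[OF disjI1[OF fT(1)]]]
        using u(1) s1 s2 by auto
    qed
  qed
  define f where "f x = Max ((\<lambda>T. l T x) ` \<T>)" for x
  have fge: "l T x \<le> f x" if "T \<in> \<T>" for T x
    unfolding f_def using fin that by (intro Max_ge) auto
  have fin_: "f x \<in> (\<lambda>T. l T x) ` \<T>" for x
    unfolding f_def using fin by (intro Max_in) auto
  have lcomb: "l T (u *\<^sub>R x + v *\<^sub>R y) = u * l T x + v * l T y" if "u + v = 1" for T x y u v
  proof -
    from that have v: "v = 1 - u" by simp
    show ?thesis unfolding l_def v by (simp add: inner_add_right algebra_simps)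
  qed
  have cf: "convex_on P f"
    unfolding convex_on_def
  proof (intro conjI cvx ballI allI impI)
    fix x y u v :: "_" assume xy: "x \<in> P" "y \<in> P" and uv: "0 \<le> (u::real)" "0 \<le> v" "u + v = 1"
    obtain T where T: "T \<in> \<T>" "f (u *\<^sub>R x + v *\<^sub>R y) = l T (u *\<^sub>R x + v *\<^sub>R y)" using fin_ by blast
    have "l T (u *\<^sub>R x + v *\<^sub>R y) = u * l T x + v * l T y" using lcomb uv by simp
    also have "\<dots> \<le> u * f x + v * f y"
      using fge[OF T(1)] uv by (intro add_mono mult_left_mono) auto
    finally show "f (u *\<^sub>R x + v *\<^sub>R y) \<le> u * f x + v * f y" using T by simp
  qed
  have faff: "f x = fst (NE T) \<bullet> x + snd (NE T)" if "T \<in> \<T>" "x \<in> convex hull T" for T x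
  proof -
    obtain T' where T': "T' \<in> \<T>" "f x = l T' x" using fin_ by blast
    have "l T' x \<le> l T x" by (rule key[OF that(1) T'(1) that(2)])
    moreover have "l T x \<le> f x" by (rule fge[OF that(1)])
    ultimately have "f x = l T x" using T' by linarith
    then show ?thesis unfolding l_def by simp
  qed
  have dist: "NE T \<noteq> NE T'" if "T \<in> \<T>" "T' \<in> \<T>" "T \<noteq> T'" for T T'
  proof -
    have c: "finite T" "card T = 4" "T \<subseteq> V" "finite T'" "card T' = 4" using cells that by auto
    have "\<not> T \<subseteq> T'"
      using card_subset_eq[OF c(4), of T] c that(3) by auto
    then obtain w where w: "w \<in> T" "w \<notin> T'" by auto
    have "l T w \<noteq> l T' w" using eq[OF that(1) w(1)] lt[OF that(2) _ w(2)] w c by auto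
    then show ?thesis unfolding l_def by auto
  qed
  have "regular_triangulation P \<T>"
    unfolding regular_triangulation_def
    apply (rule exI[of _ f], rule exI[of _ "\<lambda>T. fst (NE T)"], rule exI[of _ "\<lambda>T. snd (NE T)"])
    using cf faff dist by (auto simp: prod_eq_iff)
  then show ?thesis using f2f by blast
qed



lemma pt_nth [simp]: "pt x y z $ 1 = x" "pt x y z $ 2 = y" "pt x y z $ 3 = z"
  by (simp_all add: pt_def)

lemma pt_eq_iff [simp]: "pt a b c = pt x y z \<longleftrightarrow> a = x \<and> b = y \<and> c = z"
  by (auto simp: vec_eq_iff forall_3)

lemma vec3_eq: "(u::real^3) = v \<longleftrightarrow> u$1 = v$1 \<and> u$2 = v$2 \<and> u$3 = v$3"
  by (auto simp: vec_eq_iff forall_3)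

lemma inner3: "(u::real^3) \<bullet> v = u$1 * v$1 + u$2 * v$2 + u$3 * v$3"
  by (simp add: inner_vec_def sum_3)

lemma in_hull4:
  fixes a b c d x :: "real^3"
  assumes "distinct [a,b,c,d]" "0 \<le> ua" "0 \<le> ub" "0 \<le> uc" "0 \<le> ud" "ua + ub + uc + ud = 1"
    "x = ua *\<^sub>R a + ub *\<^sub>R b + uc *\<^sub>R c + ud *\<^sub>R d"
  shows "x \<in> convex hull {a,b,c,d}"
proof -
  define u where "u v = (if v = a then ua else if v = b then ub else if v = c then uc else ud)" for v
  have d: "a \<noteq> b" "a \<noteq> c" "a \<noteq> d" "b \<noteq> c" "b \<noteq> d" "c \<noteq> d" using assms(1) by auto
  have u: "u a = ua" "u b = ub" "u c = uc" "u d = ud" using d unfolding u_def by auto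
  have s1: "sum u {a,b,c,d} = ua + ub + uc + ud" using d u by (simp add: add.assoc)
  have s2: "(\<Sum>v\<in>{a,b,c,d}. u v *\<^sub>R v) = x" using d u assms(7) by (simp add: add.assoc)
  have nn: "\<forall>v\<in>{a,b,c,d}. 0 \<le> u v" using u assms(2-5) by auto
  show ?thesis unfolding convex_hull_finite[OF finite.insertI[OF finite.insertI[OF finite.insertI[OF finite.insertI[OF finite.emptyI]]]]]
    using s1 s2 nn assms(6) by auto
qed

lemma in_ahull4:
  fixes a b c d x :: "real^3"
  assumes "distinct [a,b,c,d]" "ua + ub + uc + ud = 1"
    "x = ua *\<^sub>R a + ub *\<^sub>R b + uc *\<^sub>R c + ud *\<^sub>R d"
  shows "x \<in> affine hull {a,b,c,d}"
proof -
  define u where "u v = (if v = a then ua else if v = b then ub else if v = c then uc else ud)" for v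
  have d: "a \<noteq> b" "a \<noteq> c" "a \<noteq> d" "b \<noteq> c" "b \<noteq> d" "c \<noteq> d" using assms(1) by auto
  have u: "u a = ua" "u b = ub" "u c = uc" "u d = ud" using d unfolding u_def by auto
  have s1: "sum u {a,b,c,d} = ua + ub + uc + ud" using d u by (simp add: add.assoc)
  have s2: "(\<Sum>v\<in>{a,b,c,d}. u v *\<^sub>R v) = x" using d u assms(3) by (simp add: add.assoc)
  show ?thesis unfolding affine_hull_finite[OF finite.insertI[OF finite.insertI[OF finite.insertI[OF finite.insertI[OF finite.emptyI]]]]]
    using s1 s2 assms(2) by auto
qed

lemma indep_of_hull:
  fixes T :: "(real^3) set"
  assumes "card T = 4" "affine hull T = UNIV"
  shows "\<not> affine_dependent T"
proof -
  have f: "finite T" using assms(1) card.infinite by fastforce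
  have "aff_dim T = 3" using aff_dim_affine_hull[of T] assms(2) by simp
  then show ?thesis unfolding affine_independent_iff_card using f assms(1) by simp
qed

definition affmap :: "(real^3 \<Rightarrow> real^3) \<Rightarrow> bool" where
  "affmap \<phi> \<longleftrightarrow> (\<exists>c L. linear L \<and> (\<forall>x. \<phi> x = c + L x))"

lemma affmapE:
  assumes "affmap \<phi>"
  obtains c L where "linear L" "\<phi> = (\<lambda>x. c + x) \<circ> L"
  using assms unfolding affmap_def by (auto simp: o_def fun_eq_iff)

lemma affmap_img:
  assumes "linear L" "\<phi> = (\<lambda>x. c + x) \<circ> L"
  shows "\<phi> ` S = (\<lambda>x. c + x) ` (L ` S)"
  using assms(2) by (simp add: image_image)

lemma affmap_hull:
  assumes "affmap \<phi>"
  shows "convex hull (\<phi> ` S) = \<phi> ` (convex hull S)"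
proof -
  obtain c L where L: "linear L" "\<phi> = (\<lambda>x. c + x) \<circ> L" using assms(1) by (rule affmapE)
  have "convex hull (\<phi> ` S) = (\<lambda>x. c + x) ` (convex hull (L ` S))"
    unfolding affmap_img[OF L] by (rule convex_hull_translation)
  also have "\<dots> = (\<lambda>x. c + x) ` (L ` (convex hull S))"
    using convex_hull_linear_image[OF L(1), of S] by simp
  also have "\<dots> = \<phi> ` (convex hull S)" unfolding affmap_img[OF L] ..
  finally show ?thesis .
qed

lemma affmap_ahull:
  assumes "affmap \<phi>"
  shows "affine hull (\<phi> ` S) = \<phi> ` (affine hull S)"
proof -
  obtain c L where L: "linear L" "\<phi> = (\<lambda>x. c + x) \<circ> L" using assms(1) by (rule affmapE)
  have "affine hull (\<phi> ` S) = (\<lambda>x. c + x) ` (affine hull (L ` S))"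
    unfolding affmap_img[OF L] by (rule affine_hull_translation)
  also have "\<dots> = (\<lambda>x. c + x) ` (L ` (affine hull S))"
    using affine_hull_linear_image[OF linear_conv_bounded_linear[THEN iffD1, OF L(1)], of S] by simp
  also have "\<dots> = \<phi> ` (affine hull S)" unfolding affmap_img[OF L] ..
  finally show ?thesis .
qed

lemma affmap_comb:
  assumes "affmap \<phi>" "sum u S = 1"
  shows "\<phi> (\<Sum>v\<in>S. u v *\<^sub>R v) = (\<Sum>v\<in>S. u v *\<^sub>R \<phi> v)"
proof -
  obtain c L where L: "linear L" "\<phi> = (\<lambda>x. c + x) \<circ> L" using assms(1) by (rule affmapE)
  have "\<phi> (\<Sum>v\<in>S. u v *\<^sub>R v) = c + (\<Sum>v\<in>S. u v *\<^sub>R L v)"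
    using L by (simp add: linear_sum linear_scale)
  also have "\<dots> = (\<Sum>v\<in>S. u v) *\<^sub>R c + (\<Sum>v\<in>S. u v *\<^sub>R L v)" using assms(2) by simp
  also have "\<dots> = (\<Sum>v\<in>S. u v *\<^sub>R \<phi> v)"
    using L by (simp add: scaleR_sum_left scaleR_add_right sum.distrib)
  finally show ?thesis .
qed

lemma affmap_inner:
  assumes "affmap \<phi>"
  shows "\<exists>n' e'. \<forall>x. n \<bullet> \<phi> x + e = n' \<bullet> x + e'"
proof -
  obtain c L where L: "linear L" "\<phi> = (\<lambda>x. c + x) \<circ> L" using assms(1) by (rule affmapE)
  have "n \<bullet> \<phi> x + e = adjoint L n \<bullet> x + (n \<bullet> c + e)" for x
    using L adjoint_works[OF L(1), of x n] by (simp add: inner_add_right inner_commute)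
  then show ?thesis by blast
qed

lemma affmap_diff:
  assumes "affmap \<phi>" "v - u = k *\<^sub>R (b - a)"
  shows "\<phi> v - \<phi> u = k *\<^sub>R (\<phi> b - \<phi> a)"
proof -
  obtain c L where L: "linear L" "\<phi> = (\<lambda>x. c + x) \<circ> L" using assms(1) by (rule affmapE)
  have "\<phi> v - \<phi> u = L (v - u)" using L by (simp add: linear_diff)
  also have "\<dots> = k *\<^sub>R (L b - L a)" using assms(2) L by (simp add: linear_diff linear_scale)
  finally show ?thesis using L by simp
qed

lemma affmap_midpoint:
  assumes "affmap \<phi>"
  shows "\<phi> (midpoint a b) = midpoint (\<phi> a) (\<phi> b)"
proof -
  obtain c L where L: "linear L" "\<phi> = (\<lambda>x. c + x) \<circ> L" using assms(1) by (rule affmapE)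
  have "\<phi> (midpoint a b) = c + ((1/2) *\<^sub>R (L a + L b))"
    using L unfolding midpoint_def by (simp add: linear_add linear_scale)
  also have "\<dots> = (1/2) *\<^sub>R ((c + L a) + (c + L b))"
    by (simp add: scaleR_right_distrib)
  also have "\<dots> = midpoint (\<phi> a) (\<phi> b)" using L unfolding midpoint_def by simp
  finally show ?thesis .
qed

lemma affmap_id: "affmap id"
  unfolding affmap_def by (rule exI[of _ 0], rule exI[of _ id]) (simp add: linear_id)



locale tri =
  fixes q :: nat
  assumes q1: "1 \<le> q"
begin

definition "A0 = pt 0 0 0"
definition "A1 = pt (real q) 0 0"
definition "A2 = pt (2 * real q) 0 0"
definition "PP = pt 0 0 1"
definition "RR = pt (real q) (real q) 1"
definition "B0 = pt 0 0 2"
definition "B1 = pt 0 (real q) 2"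
definition "B2 = pt 0 (2 * real q) 2"
definition C :: "nat \<Rightarrow> real^3" where "C i = pt (real q - real i) (real i) 1"

lemmas pts = A0_def A1_def A2_def PP_def RR_def B0_def B1_def B2_def C_def

definition "Corners = {A0, A2, B0, B2}"
definition "Mids = {A1, PP, RR, B1}"
definition "V = Corners \<union> Mids \<union> C ` {0..q}"

definition h :: "real^3 \<Rightarrow> real" where
  "h p = (if p \<in> Corners then 3 else if p \<in> Mids then 1 else p$2 * (p$2 - real q))"

lemma qpos: "real q > 0" "real q \<ge> 1" using q1 by auto

lemma h_vals [simp]:
  "h A0 = 3" "h A2 = 3" "h B0 = 3" "h B2 = 3" "h A1 = 1" "h PP = 1" "h RR = 1" "h B1 = 1"
  "h (C i) = real i * (real i - real q)"
  using qpos by (auto simp: h_def Corners_def Mids_def pts)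

definition good :: "(real^3) set \<Rightarrow> bool" where
  "good T \<longleftrightarrow> (\<exists>n e. (\<forall>w\<in>T. n \<bullet> w + e = h w) \<and> (\<forall>v\<in>V-T. n \<bullet> v + e < h v))"

lemma inner_pt: "pt a b c \<bullet> pt x y z = a*x + b*y + c*z"
  by (simp add: inner3)

lemma C_inj [simp]: "C i = C k \<longleftrightarrow> i = k"
  by (simp add: C_def)

lemma C_ne [simp]: "C i \<noteq> A0" "C i \<noteq> A1" "C i \<noteq> A2" "C i \<noteq> PP" "C i \<noteq> RR" "C i \<noteq> B0" "C i \<noteq> B1" "C i \<noteq> B2"
  "A0 \<noteq> C i" "A1 \<noteq> C i" "A2 \<noteq> C i" "PP \<noteq> C i" "RR \<noteq> C i" "B0 \<noteq> C i" "B1 \<noteq> C i" "B2 \<noteq> C i"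
  using qpos by (auto simp: pts)

lemma pts_ne [simp]: "A0 \<noteq> A1" "A0 \<noteq> A2" "A0 \<noteq> PP" "A0 \<noteq> RR" "A0 \<noteq> B0" "A0 \<noteq> B1" "A0 \<noteq> B2"
  "A1 \<noteq> A2" "A1 \<noteq> PP" "A1 \<noteq> RR" "A1 \<noteq> B0" "A1 \<noteq> B1" "A1 \<noteq> B2"
  "A2 \<noteq> PP" "A2 \<noteq> RR" "A2 \<noteq> B0" "A2 \<noteq> B1" "A2 \<noteq> B2"
  "PP \<noteq> RR" "PP \<noteq> B0" "PP \<noteq> B1" "PP \<noteq> B2"
  "RR \<noteq> B0" "RR \<noteq> B1" "RR \<noteq> B2" "B0 \<noteq> B1" "B0 \<noteq> B2" "B1 \<noteq> B2"
  using qpos by (auto simp: pts)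

lemma V_cases:
  assumes "v \<in> V"
  obtains "v = A0" | "v = A1" | "v = A2" | "v = PP" | "v = RR" | "v = B0" | "v = B1" | "v = B2"
    | i where "i \<le> q" "v = C i"
  using assms unfolding V_def Corners_def Mids_def by auto

lemma good_L1:
  assumes j: "1 \<le> j" "j < q"
  shows "good {A0, PP, C j, C (j+1)}"
proof -
  define J Q where "J = real j" and "Q = real q"
  have Q: "Q > 0" "1 \<le> J" "J + 1 \<le> Q" using qpos j unfolding J_def Q_def by auto
  define n where "n = pt (-(J*J+J+1)/Q) (-(J*J+J+1)/Q + 2*J+1-Q) (-2)"
  have val: "n \<bullet> pt X Y Z + 3 = -(J*J+J+1)*((X+Y)/Q) + (2*J+1-Q)*Y - 2*Z + 3" for X Y Z
    unfolding n_def inner_pt using Q(1) by (simp add: field_simps)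
  have vC: "n \<bullet> C i + 3 = -(J*J+J+1) + (2*J+1-Q)* real i + 1" for i
    unfolding C_def val using Q by (simp add: Q_def)
  have vA0: "n \<bullet> A0 + 3 = 3" unfolding A0_def val by simp
  have vPP: "n \<bullet> PP + 3 = 1" unfolding PP_def val by simp
  have vA1: "n \<bullet> A1 + 3 = -(J*J+J+1) + 3" unfolding A1_def val using Q by (simp add: Q_def[symmetric])
  have vA2: "n \<bullet> A2 + 3 = -2*(J*J+J+1) + 3" unfolding A2_def val using Q by (simp add: Q_def[symmetric])
  have vRR: "n \<bullet> RR + 3 = -2*(J*J+J+1) + (2*J+1-Q)*Q + 1" unfolding RR_def val using Q by (simp add: Q_def[symmetric])
  have vB0: "n \<bullet> B0 + 3 = -1" unfolding B0_def val by simp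
  have vB1: "n \<bullet> B1 + 3 = -(J*J+J+1) + (2*J+1-Q)*Q - 1" unfolding B1_def val using Q by (simp add: Q_def[symmetric])
  have vB2: "n \<bullet> B2 + 3 = -2*(J*J+J+1) + (2*J+1-Q)*(2*Q) - 1" unfolding B2_def val using Q by (simp add: Q_def[symmetric])
  have eqs: "n \<bullet> w + 3 = h w" if "w \<in> {A0, PP, C j, C (j+1)}" for w
  proof -
    have "n \<bullet> C j + 3 = h (C j)" unfolding vC h_vals J_def[symmetric] Q_def[symmetric]
      by (simp add: algebra_simps)
    moreover have "n \<bullet> C (j+1) + 3 = h (C (j+1))" unfolding vC h_vals J_def[symmetric] Q_def[symmetric]
      by (simp add: algebra_simps J_def)
    ultimately show ?thesis using that vA0 vPP by auto
  qed
  have lts: "n \<bullet> v + 3 < h v" if "v \<in> V - {A0, PP, C j, C (j+1)}" for v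
  proof -
    have v: "v \<in> V" "v \<noteq> A0" "v \<noteq> PP" "v \<noteq> C j" "v \<noteq> C (j+1)" using that by auto
    have sq: "0 \<le> J*J" by simp
    have sq1: "J \<le> J*J" using mult_left_mono[of 1 J J] Q by simp
    have m: "0 \<le> (Q-J-1)*(Q-J)" using Q by (intro mult_nonneg_nonneg) auto
    show ?thesis
    proof (cases rule: V_cases[OF v(1)])
      case 2
      have "-(J*J+J+1) + 3 - 1 = 1 - J*J - J" by (simp add: algebra_simps)
      then have "n \<bullet> A1 + 3 < 1" using vA1 Q sq1 by linarith
      then show ?thesis using 2 by simp
    next
      case 3
      have "-2*(J*J+J+1) + 3 - 3 = -2*(J*J) - 2*J - 2" by (simp add: algebra_simps)
      then have "n \<bullet> A2 + 3 < 3" using vA2 Q sq1 by linarith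
      then show ?thesis using 3 by simp
    next
      case 5
      have "-2*(J*J+J+1) + (2*J+1-Q)*Q + 1 - 1 = -((Q-J-1)*(Q-J)) - J*J - J - 2"
        by (simp add: algebra_simps)
      then have "n \<bullet> RR + 3 < 1" using vRR m sq Q by linarith
      then show ?thesis using 5 by simp
    next
      case 6 then show ?thesis using vB0 by simp
    next
      case 7
      have "-(J*J+J+1) + (2*J+1-Q)*Q - 1 - 1 = -((Q-J-1)*(Q-J)) - 3"
        by (simp add: algebra_simps)
      then have "n \<bullet> B1 + 3 < 1" using vB1 m sq Q by linarith
      then show ?thesis using 7 by simp
    next
      case 8
      have "-2*(J*J+J+1) + (2*J+1-Q)*(2*Q) - 1 - 3 = -2*((Q-J-1)*(Q-J)) - 6"
        by (simp add: algebra_simps)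
      then have "n \<bullet> B2 + 3 < 3" using vB2 m sq Q by linarith
      then show ?thesis using 8 by simp
    next
      case (9 i)
      have ij: "i + 1 \<le> j \<or> j + 2 \<le> i" using v 9 by auto
      have p: "0 < (real i - J)*(real i - J - 1)"
        using ij unfolding J_def by (auto intro: mult_pos_pos mult_neg_neg)
      have "n \<bullet> C i + 3 - h (C i) = -((real i - J)*(real i - J - 1))"
        unfolding vC h_vals Q_def[symmetric] by (simp add: algebra_simps)
      then have "n \<bullet> C i + 3 < h (C i)" using p by linarith
      then show ?thesis using 9 by simp
    qed (use v in auto)
  qed
  show ?thesis unfolding good_def using eqs lts by blast
qed

lemma good_L2: "good {A0, A1, PP, C 1}"
proof -
  define Q where "Q = real q"
  have Q: "Q > 0" "1 \<le> Q" using qpos unfolding Q_def by auto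
  define n where "n = pt (-2/Q) (-2/Q + 2 - Q) (-2)"
  have val: "n \<bullet> pt X Y Z + 3 = -2*((X+Y)/Q) + (2-Q)*Y - 2*Z + 3" for X Y Z
    unfolding n_def inner_pt using Q(1) by (simp add: field_simps)
  have vC: "n \<bullet> C i + 3 = -1 + (2-Q)* real i" for i
    unfolding C_def val using Q by (simp add: Q_def)
  have vA0: "n \<bullet> A0 + 3 = 3" unfolding A0_def val by simp
  have vPP: "n \<bullet> PP + 3 = 1" unfolding PP_def val by simp
  have vA1: "n \<bullet> A1 + 3 = 1" unfolding A1_def val using Q by (simp add: Q_def[symmetric])
  have vA2: "n \<bullet> A2 + 3 = -1" unfolding A2_def val using Q by (simp add: Q_def[symmetric])
  have vRR: "n \<bullet> RR + 3 = -3 + (2-Q)*Q" unfolding RR_def val using Q by (simp add: Q_def[symmetric])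
  have vB0: "n \<bullet> B0 + 3 = -1" unfolding B0_def val by simp
  have vB1: "n \<bullet> B1 + 3 = -3 + (2-Q)*Q" unfolding B1_def val using Q by (simp add: Q_def[symmetric])
  have vB2: "n \<bullet> B2 + 3 = -5 + (2-Q)*(2*Q)" unfolding B2_def val using Q by (simp add: Q_def[symmetric])
  have eqs: "n \<bullet> w + 3 = h w" if "w \<in> {A0, A1, PP, C 1}" for w
  proof -
    have "n \<bullet> C 1 + 3 = h (C 1)" unfolding vC h_vals Q_def[symmetric]
      by (simp add: algebra_simps)
    then show ?thesis using that vA0 vPP vA1 by auto
  qed
  have lts: "n \<bullet> v + 3 < h v" if "v \<in> V - {A0, A1, PP, C 1}" for v
  proof -
    have v: "v \<in> V" "v \<noteq> A0" "v \<noteq> A1" "v \<noteq> PP" "v \<noteq> C 1" using that by auto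
    have m: "0 \<le> (Q-1)*(Q-1)" by simp
    show ?thesis
    proof (cases rule: V_cases[OF v(1)])
      case 3 then show ?thesis using vA2 by simp
    next
      case 5
      have "-3 + (2-Q)*Q - 1 = -((Q-1)*(Q-1)) - 3" by (simp add: algebra_simps)
      then have "n \<bullet> RR + 3 < 1" using vRR m by linarith
      then show ?thesis using 5 by simp
    next
      case 6 then show ?thesis using vB0 by simp
    next
      case 7
      have "-3 + (2-Q)*Q - 1 = -((Q-1)*(Q-1)) - 3" by (simp add: algebra_simps)
      then have "n \<bullet> B1 + 3 < 1" using vB1 m by linarith
      then show ?thesis using 7 by simp
    next
      case 8
      have "-5 + (2-Q)*(2*Q) - 3 = -2*((Q-1)*(Q-1)) - 6" by (simp add: algebra_simps)
      then have "n \<bullet> B2 + 3 < 3" using vB2 m by linarith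
      then show ?thesis using 8 by simp
    next
      case (9 i)
      have ij: "i \<noteq> 1" using v 9 by auto
      have "real i - 1 \<noteq> 0" using ij by simp
      then have p: "0 < (real i - 1)*(real i - 1)" using not_real_square_gt_zero by blast
      have "n \<bullet> C i + 3 - h (C i) = -((real i - 1)*(real i - 1))"
        unfolding vC h_vals Q_def[symmetric] by (simp add: algebra_simps)
      then have "n \<bullet> C i + 3 < h (C i)" using p by linarith
      then show ?thesis using 9 by simp
    qed (use v in auto)
  qed
  show ?thesis unfolding good_def using eqs lts by blast
qed

lemma good_L3: "good {A1, PP, C 0, C 1}"
proof -
  define Q where "Q = real q"
  have Q: "Q > 0" "1 \<le> Q" using qpos unfolding Q_def by auto
  define n where "n = pt (-1/Q) (-1/Q + 1 - Q) (-1)"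
  have val: "n \<bullet> pt X Y Z + 2 = -((X+Y)/Q) + (1-Q)*Y - Z + 2" for X Y Z
    unfolding n_def inner_pt using Q(1) by (simp add: field_simps)
  have vC: "n \<bullet> C i + 2 = (1-Q)* real i" for i
    unfolding C_def val using Q by (simp add: Q_def)
  have vA0: "n \<bullet> A0 + 2 = 2" unfolding A0_def val by simp
  have vPP: "n \<bullet> PP + 2 = 1" unfolding PP_def val by simp
  have vA1: "n \<bullet> A1 + 2 = 1" unfolding A1_def val using Q by (simp add: Q_def[symmetric])
  have vA2: "n \<bullet> A2 + 2 = 0" unfolding A2_def val using Q by (simp add: Q_def[symmetric])
  have vRR: "n \<bullet> RR + 2 = -1 + (1-Q)*Q" unfolding RR_def val using Q by (simp add: Q_def[symmetric])
  have vB0: "n \<bullet> B0 + 2 = 0" unfolding B0_def val by simp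
  have vB1: "n \<bullet> B1 + 2 = -1 + (1-Q)*Q" unfolding B1_def val using Q by (simp add: Q_def[symmetric])
  have vB2: "n \<bullet> B2 + 2 = -2 + (1-Q)*(2*Q)" unfolding B2_def val using Q by (simp add: Q_def[symmetric])
  have eqs: "n \<bullet> w + 2 = h w" if "w \<in> {A1, PP, C 0, C 1}" for w
  proof -
    have "n \<bullet> C 1 + 2 = h (C 1)" unfolding vC h_vals Q_def[symmetric]
      by (simp add: algebra_simps)
    moreover have "n \<bullet> C 0 + 2 = h (C 0)" unfolding vC h_vals Q_def[symmetric]
      by (simp add: algebra_simps)
    ultimately show ?thesis using that vPP vA1 by auto
  qed
  have lts: "n \<bullet> v + 2 < h v" if "v \<in> V - {A1, PP, C 0, C 1}" for v
  proof -
    have v: "v \<in> V" "v \<noteq> A1" "v \<noteq> PP" "v \<noteq> C 0" "v \<noteq> C 1" using that by auto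
    have m: "0 \<le> (Q-1)*(Q-1)" by simp
    show ?thesis
    proof (cases rule: V_cases[OF v(1)])
      case 1 then show ?thesis using vA0 by simp
    next
      case 3 then show ?thesis using vA2 by simp
    next
      case 5
      have "-1 + (1-Q)*Q - 1 = -((Q-1)*(Q-1)) - Q - 1" by (simp add: algebra_simps)
      then have "n \<bullet> RR + 2 < 1" using vRR m Q by linarith
      then show ?thesis using 5 by simp
    next
      case 6 then show ?thesis using vB0 by simp
    next
      case 7
      have "-1 + (1-Q)*Q - 1 = -((Q-1)*(Q-1)) - Q - 1" by (simp add: algebra_simps)
      then have "n \<bullet> B1 + 2 < 1" using vB1 m Q by linarith
      then show ?thesis using 7 by simp
    next
      case 8
      have "-2 + (1-Q)*(2*Q) - 3 = -2*((Q-1)*(Q-1)) - 2*Q - 3" by (simp add: algebra_simps)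
      then have "n \<bullet> B2 + 2 < 3" using vB2 m Q by linarith
      then show ?thesis using 8 by simp
    next
      case (9 i)
      have ij: "2 \<le> i" using v 9 by (cases i) (auto simp: eval_nat_numeral)
      have p: "0 < real i * (real i - 1)" using ij by (intro mult_pos_pos) auto
      have "n \<bullet> C i + 2 - h (C i) = -(real i * (real i - 1))"
        unfolding vC h_vals Q_def[symmetric] by (simp add: algebra_simps)
      then have "n \<bullet> C i + 2 < h (C i)" using p by linarith
      then show ?thesis using 9 by simp
    qed (use v in auto)
  qed
  show ?thesis unfolding good_def using eqs lts by blast
qed

end


context tri begin

definition "Lam = Lambda1 q"

lemma pmod: "(-1::int) mod int q = int q - 1"
proof -
  have a: "int q - 1 = -1 + int q" by simp
  have "(int q - 1) mod int q = (-1 + int q) mod int q" by (subst a) (rule refl)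
  also have "\<dots> = (-1) mod int q" by (rule mod_add_self2)
  finally have e: "(int q - 1) mod int q = (-1::int) mod int q" .
  have f: "(int q - 1) mod int q = int q - 1" using q1 by (intro mod_pos_pos_trivial) auto
  show ?thesis by (rule trans[OF e[symmetric] f])
qed

lemma Lam_mem: "p \<in> Lam \<longleftrightarrow> (\<exists>a b c k::int. p = pt (of_int (int q * a + k * (int q - 1))) (of_int (int q * b + k)) (of_int c))"
  unfolding Lam_def Lambda1_def Let_def pmod by simp

lemma Lam_iff: "p \<in> Lam \<longleftrightarrow> (\<exists>X Y Z :: int. p = pt (of_int X) (of_int Y) (of_int Z) \<and> int q dvd X + Y)"
proof
  assume "p \<in> Lam"
  then obtain a b c k :: int where p: "p = pt (of_int (int q * a + k * (int q - 1))) (of_int (int q * b + k)) (of_int c)"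
    unfolding Lam_mem by blast
  have "int q * a + k * (int q - 1) + (int q * b + k) = int q * (a + b + k)" by (simp add: algebra_simps)
  then have "int q dvd (int q * a + k * (int q - 1)) + (int q * b + k)" by simp
  then show "\<exists>X Y Z :: int. p = pt (of_int X) (of_int Y) (of_int Z) \<and> int q dvd X + Y"
    using p by blast
next
  assume "\<exists>X Y Z :: int. p = pt (of_int X) (of_int Y) (of_int Z) \<and> int q dvd X + Y"
  then obtain X Y Z m :: int where p: "p = pt (of_int X) (of_int Y) (of_int Z)" and m: "X + Y = int q * m"
    unfolding dvd_def by blast
  have e: "X = int q * (m - Y) + Y * (int q - 1)" "Y = int q * 0 + Y" using m by (simp_all add: algebra_simps)
  have "p = pt (of_int (int q * (m - Y) + Y * (int q - 1))) (of_int (int q * 0 + Y)) (of_int Z)"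
    using p e by simp
  then show "p \<in> Lam" unfolding Lam_mem by blast
qed

end


context tri begin

definition "H = {p::real^3. 0 \<le> p$1 \<and> 0 \<le> p$2 \<and> p$2 \<le> real q * p$3 \<and> p$1 + real q * p$3 \<le> 2 * real q}"
definition "Hs = {p::real^3. 0 < p$1 \<and> 0 < p$2 \<and> p$2 < real q * p$3 \<and> p$1 + real q * p$3 < 2 * real q}"
definition "Pset = convex hull Corners"
definition xx :: "real^3 \<Rightarrow> real" where "xx p = (p$1 + p$2) / real q"

lemma H_eq: "H = {p. pt (-1) 0 0 \<bullet> p \<le> 0} \<inter> {p. pt 0 (-1) 0 \<bullet> p \<le> 0} \<inter> {p. pt 0 1 (- real q) \<bullet> p \<le> 0}
   \<inter> {p. pt 1 0 (real q) \<bullet> p \<le> 2 * real q}"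
  unfolding H_def by (auto simp: inner3)

lemma Hs_eq: "Hs = {p. pt (-1) 0 0 \<bullet> p < 0} \<inter> {p. pt 0 (-1) 0 \<bullet> p < 0} \<inter> {p. pt 0 1 (- real q) \<bullet> p < 0}
   \<inter> {p. pt 1 0 (real q) \<bullet> p < 2 * real q}"
  unfolding Hs_def by (auto simp: inner3)

lemma convex_H: "convex H"
  unfolding H_eq by (intro convex_Int convex_halfspace_le)

lemma open_Hs: "open Hs"
  unfolding Hs_eq by (intro open_Int open_halfspace_lt)

lemma scaleR_pt: "c *\<^sub>R pt x y z = pt (c*x) (c*y) (c*z)"
  by (simp add: vec3_eq)

lemma Pset_eq: "(\<lambda>x. 2 *\<^sub>R x) ` Delta' q = Pset"
proof -
  have "(\<lambda>x. 2 *\<^sub>R x) ` DeltaVerts q = Corners"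
    unfolding DeltaVerts_def Corners_def pts by (simp add: scaleR_pt)
  then show ?thesis unfolding Delta'_def Pset_def by (metis convex_hull_scaling)
qed

lemma Corners_H: "Corners \<subseteq> H"
  unfolding Corners_def H_def pts using qpos by auto

lemma Pset_H: "Pset \<subseteq> H"
  unfolding Pset_def by (intro hull_minimal Corners_H convex_H)

lemma convex_Pset: "convex Pset" unfolding Pset_def by simp

lemma vert_Pset: "A0 \<in> Pset" "A1 \<in> Pset" "PP \<in> Pset" "i \<le> q \<Longrightarrow> C i \<in> Pset"
proof -
  have d: "distinct [A0, A2, B0, B2]" by simp
  have Q: "real q > 0" using qpos by simp
  show "A0 \<in> Pset" unfolding Pset_def Corners_def by (simp add: hull_inc)
  show "A1 \<in> Pset" unfolding Pset_def Corners_def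
    by (rule in_hull4[OF d, of "1/2" "1/2" 0 0]) (simp_all add: pts vec3_eq)
  show "PP \<in> Pset" unfolding Pset_def Corners_def
    by (rule in_hull4[OF d, of "1/2" 0 "1/2" 0]) (simp_all add: pts vec3_eq)
  assume i: "i \<le> q"
  show "C i \<in> Pset" unfolding Pset_def Corners_def
    apply (rule in_hull4[OF d, of "real i/(2*real q)" "(real q - real i)/(2*real q)" "1/2 - real i/(2*real q)" "real i/(2*real q)"])
    using Q i by (simp_all add: pts vec3_eq field_simps)
qed

lemma Lam_I: "int q dvd X + Y \<Longrightarrow> p = pt (of_int X) (of_int Y) (of_int Z) \<Longrightarrow> p \<in> Lam"
  unfolding Lam_iff by blast

lemma vert_Lam: "A0 \<in> Lam" "A1 \<in> Lam" "A2 \<in> Lam" "PP \<in> Lam" "RR \<in> Lam" "B0 \<in> Lam" "B1 \<in> Lam" "B2 \<in> Lam"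
  "C i \<in> Lam"
  unfolding pts
  apply (rule Lam_I[of 0 0 _ 0]; simp)
  apply (rule Lam_I[of "int q" 0 _ 0]; simp)
  apply (rule Lam_I[of "2 * int q" 0 _ 0]; simp)
  apply (rule Lam_I[of 0 0 _ 1]; simp)
  apply (rule Lam_I[of "int q" "int q" _ 1]; simp)
  apply (rule Lam_I[of 0 0 _ 2]; simp)
  apply (rule Lam_I[of 0 "int q" _ 2]; simp)
  apply (rule Lam_I[of 0 "2 * int q" _ 2]; simp)
  apply (rule Lam_I[of "int q - int i" "int i" _ 1]; simp)
  done

lemma vert_V: "A0 \<in> V" "A1 \<in> V" "A2 \<in> V" "PP \<in> V" "RR \<in> V" "B0 \<in> V" "B1 \<in> V" "B2 \<in> V"
  "i \<le> q \<Longrightarrow> C i \<in> V"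
  unfolding V_def Corners_def Mids_def by auto

end


context tri begin

definition edgeok :: "real^3 \<Rightarrow> real^3 \<Rightarrow> bool" where
  "edgeok u v \<longleftrightarrow> midpoint u v \<in> Hs \<or> (\<exists>w1\<in>Corners. \<exists>w2\<in>Corners. w1 \<noteq> w2 \<and> (\<exists>c. v - u = c *\<^sub>R (w2 - w1)))"

definition "edges T \<longleftrightarrow> (\<forall>u\<in>T. \<forall>v\<in>T. u \<noteq> v \<longrightarrow> edgeok u v)"

definition "unimod T \<longleftrightarrow> (\<forall>x\<in>Lam. \<exists>c::real^3\<Rightarrow>int. sum c T = 1 \<and> x = (\<Sum>v\<in>T. of_int (c v) *\<^sub>R v))"

definition "cellok T \<longleftrightarrow> finite T \<and> card T = 4 \<and> T \<subseteq> V \<and> T \<subseteq> Lam \<and> affine hull T = UNIV \<and>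
   convex hull T \<subseteq> Pset \<and> unimod T \<and> good T \<and> edges T"

lemma edgeok_sym: "edgeok u v \<Longrightarrow> edgeok v u"
  unfolding edgeok_def
proof (elim disjE bexE conjE exE)
  assume "midpoint u v \<in> Hs" then show "midpoint v u \<in> Hs \<or> (\<exists>w1\<in>Corners. \<exists>w2\<in>Corners. w1 \<noteq> w2 \<and> (\<exists>c. u - v = c *\<^sub>R (w2 - w1)))"
    by (simp add: midpoint_sym)
next
  fix w1 w2 c assume "w1 \<in> Corners" "w2 \<in> Corners" "w1 \<noteq> w2" "v - u = c *\<^sub>R (w2 - w1)"
  then have "u - v = (-c) *\<^sub>R (w2 - w1)" by (metis minus_diff_eq scaleR_minus_left)
  then show "midpoint v u \<in> Hs \<or> (\<exists>w1\<in>Corners. \<exists>w2\<in>Corners. w1 \<noteq> w2 \<and> (\<exists>c. u - v = c *\<^sub>R (w2 - w1)))"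
    using \<open>w1 \<in> Corners\<close> \<open>w2 \<in> Corners\<close> \<open>w1 \<noteq> w2\<close> by blast
qed

lemma edges4:
  assumes "edgeok a b" "edgeok a c" "edgeok a d" "edgeok b c" "edgeok b d" "edgeok c d"
  shows "edges {a,b,c,d}"
  unfolding edges_def using assms edgeok_sym by auto

lemma par: "v - u = c *\<^sub>R (wb - wa) \<Longrightarrow> wa \<in> Corners \<Longrightarrow> wb \<in> Corners \<Longrightarrow> wa \<noteq> wb \<Longrightarrow> edgeok u v"
  unfolding edgeok_def by blast

lemma midp: "midpoint u v \<in> Hs \<Longrightarrow> edgeok u v"
  unfolding edgeok_def by blast

lemma midpoint_pt: "midpoint (pt a b c) (pt x y z) = pt ((a+x)/2) ((b+y)/2) ((c+z)/2)"
  by (simp add: vec3_eq midpoint_def field_simps)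

lemma unimod4:
  assumes d: "distinct [a,b,c,d]"
    and r: "\<And>x. x \<in> Lam \<Longrightarrow> \<exists>ia ib ic id::int. ia+ib+ic+id = 1 \<and>
              x = of_int ia *\<^sub>R a + of_int ib *\<^sub>R b + of_int ic *\<^sub>R c + of_int id *\<^sub>R d"
  shows "unimod {a,b,c,d}"
  unfolding unimod_def
proof
  fix x assume "x \<in> Lam"
  then obtain ia ib ic id :: int where i: "ia+ib+ic+id = 1"
    "x = of_int ia *\<^sub>R a + of_int ib *\<^sub>R b + of_int ic *\<^sub>R c + of_int id *\<^sub>R d" using r by blast
  define u where "u v = (if v = a then ia else if v = b then ib else if v = c then ic else id)" for v
  have dd: "a \<noteq> b" "a \<noteq> c" "a \<noteq> d" "b \<noteq> c" "b \<noteq> d" "c \<noteq> d" using d by auto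
  have u: "u a = ia" "u b = ib" "u c = ic" "u d = id" using dd unfolding u_def by auto
  have s1: "sum u {a,b,c,d} = 1" using dd u i(1) by (simp add: add.assoc)
  have s2: "x = (\<Sum>v\<in>{a,b,c,d}. of_int (u v) *\<^sub>R v)" using dd u i(2) by (simp add: add.assoc)
  show "\<exists>cc::real^3\<Rightarrow>int. sum cc {a,b,c,d} = 1 \<and> x = (\<Sum>v\<in>{a,b,c,d}. of_int (cc v) *\<^sub>R v)"
    using s1 s2 by blast
qed

lemma cell4:
  assumes d: "distinct [a,b,c,d]"
    and V: "{a,b,c,d} \<subseteq> V" and L: "{a,b,c,d} \<subseteq> Lam" and P: "{a,b,c,d} \<subseteq> Pset"
    and b: "\<And>x. \<exists>ua ub uc ud. ua+ub+uc+ud = 1 \<and> x = ua *\<^sub>R a + ub *\<^sub>R b + uc *\<^sub>R c + ud *\<^sub>R d"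
    and "unimod {a,b,c,d}" "good {a,b,c,d}" "edges {a,b,c,d}"
  shows "cellok {a,b,c,d}"
proof -
  have "affine hull {a,b,c,d} = UNIV"
  proof (rule set_eqI, rule iffI)
    fix x :: "real^3"
    obtain ua ub uc ud where "ua+ub+uc+ud = 1" "x = ua *\<^sub>R a + ub *\<^sub>R b + uc *\<^sub>R c + ud *\<^sub>R d" using b by blast
    then show "x \<in> affine hull {a,b,c,d}" by (intro in_ahull4[OF d])
  qed auto
  moreover have "convex hull {a,b,c,d} \<subseteq> Pset" using P convex_Pset by (intro hull_minimal)
  moreover have "card {a,b,c,d} = 4" using d by simp
  ultimately show ?thesis unfolding cellok_def using assms by auto
qed

lemma Lam_cases:
  assumes "x \<in> Lam"
  obtains X Y Z m :: int where "x = pt (of_int X) (of_int Y) (of_int Z)" "X + Y = int q * m"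
  using assms unfolding Lam_iff dvd_def by blast

lemma cellok_L1:
  assumes j: "1 \<le> j" "j < q"
  shows "cellok {A0, PP, C j, C (j+1)}"
proof -
  define J Q where "J = real j" and "Q = real q"
  have Q: "Q > 0" "1 \<le> J" "J + 1 \<le> Q" using qpos j unfolding J_def Q_def by auto
  have d: "distinct [A0, PP, C j, C (j+1)]" by simp
  have bary: "x = (1 - x$3) *\<^sub>R A0 + (x$3 - xx x) *\<^sub>R PP + ((J+1) * xx x - x$2) *\<^sub>R C j
      + (x$2 - J * xx x) *\<^sub>R C (j+1)" for x
    using Q unfolding pts xx_def J_def[symmetric] Q_def[symmetric]
    by (simp add: vec3_eq field_simps J_def)
  show ?thesis
  proof (rule cell4[OF d])
    show "{A0, PP, C j, C (j+1)} \<subseteq> V" using j vert_V by auto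
    show "{A0, PP, C j, C (j+1)} \<subseteq> Lam" using vert_Lam by auto
    show "{A0, PP, C j, C (j+1)} \<subseteq> Pset" using j vert_Pset by auto
    show "\<exists>ua ub uc ud. ua+ub+uc+ud = 1 \<and> x = ua *\<^sub>R A0 + ub *\<^sub>R PP + uc *\<^sub>R C j + ud *\<^sub>R C (j+1)" for x
      by (rule exI[of _ "1 - x$3"], rule exI[of _ "x$3 - xx x"], rule exI[of _ "(J+1) * xx x - x$2"],
          rule exI[of _ "x$2 - J * xx x"]) (use bary[of x] in \<open>simp add: algebra_simps\<close>)
    show "good {A0, PP, C j, C (j+1)}" by (rule good_L1[OF j])
    show "unimod {A0, PP, C j, C (j+1)}"
    proof (rule unimod4[OF d])
      fix x assume "x \<in> Lam"
      then obtain X Y Z m :: int where x: "x = pt (of_int X) (of_int Y) (of_int Z)" "X + Y = int q * m"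
        by (rule Lam_cases)
      have xm: "xx x = of_int m" using x Q unfolding xx_def Q_def
        by (simp add: field_simps) (metis of_int_add of_int_mult of_int_of_nat_eq)
      show "\<exists>ia ib ic id::int. ia+ib+ic+id = 1 \<and>
              x = of_int ia *\<^sub>R A0 + of_int ib *\<^sub>R PP + of_int ic *\<^sub>R C j + of_int id *\<^sub>R C (j+1)"
        apply (rule exI[of _ "1 - Z"], rule exI[of _ "Z - m"], rule exI[of _ "(int j+1) * m - Y"],
          rule exI[of _ "Y - int j * m"])
        using bary[of x] xm x(1) by (simp add: J_def algebra_simps)
    qed
    show "edges {A0, PP, C j, C (j+1)}"
    proof (rule edges4)
      show "edgeok A0 PP" by (rule par[where c="1/2" and wa=A0 and wb=B0]) (auto simp: pts Corners_def vec3_eq)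
      show "edgeok A0 (C j)" using Q unfolding pts by (intro midp) (simp add: midpoint_pt Hs_def J_def Q_def field_simps)
      show "edgeok A0 (C (j+1))"
      proof (cases "j + 1 < q")
        case True then show ?thesis using Q unfolding pts by (intro midp) (simp add: midpoint_pt Hs_def J_def Q_def field_simps)
      next
        case False then have "j + 1 = q" using j by simp
        then show ?thesis by (intro par[where c="1/2" and wa=A0 and wb=B2]) (auto simp: pts Corners_def vec3_eq)
      qed
      show "edgeok PP (C j)" using Q unfolding pts by (intro midp) (simp add: midpoint_pt Hs_def J_def Q_def field_simps)
      show "edgeok PP (C (j+1))"
      proof (cases "j + 1 < q")
        case True then show ?thesis using Q unfolding pts by (intro midp) (simp add: midpoint_pt Hs_def J_def Q_def field_simps)
      next
        case False then have "j + 1 = q" using j by simp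
        then show ?thesis by (intro par[where c="1/2" and wa=B0 and wb=B2]) (auto simp: pts Corners_def vec3_eq)
      qed
      show "edgeok (C j) (C (j+1))" using Q unfolding pts by (intro midp) (simp add: midpoint_pt Hs_def J_def Q_def field_simps)
    qed
  qed
qed

lemma edge_A1C1: "edgeok A1 (C 1)"
proof (cases "real q = 1")
  case True then have Q1: "real q = 1" by simp
  show ?thesis
    apply (rule par[where c="1/2" and wa=A2 and wb=B2])
    unfolding pts Corners_def using Q1 by (auto simp: vec3_eq)
next
  case False then have "real q \<ge> 2" using qpos by simp
  then show ?thesis unfolding pts by (intro midp) (simp add: midpoint_pt Hs_def field_simps)
qed

lemma edge_PPC1: "edgeok PP (C 1)"
proof (cases "real q = 1")
  case True then have Q1: "real q = 1" by simp
  show ?thesis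
    apply (rule par[where c="1/2" and wa=B0 and wb=B2])
    unfolding pts Corners_def using Q1 by (auto simp: vec3_eq)
next
  case False then have "real q \<ge> 2" using qpos by simp
  then show ?thesis unfolding pts by (intro midp) (simp add: midpoint_pt Hs_def field_simps)
qed

lemma edge_A0C1: "edgeok A0 (C 1)"
proof (cases "real q = 1")
  case True then have Q1: "real q = 1" by simp
  show ?thesis
    apply (rule par[where c="1/2" and wa=A0 and wb=B2])
    unfolding pts Corners_def using Q1 by (auto simp: vec3_eq)
next
  case False then have "real q \<ge> 2" using qpos by simp
  then show ?thesis unfolding pts by (intro midp) (simp add: midpoint_pt Hs_def field_simps)
qed

lemma xx_Lam: "x = pt (of_int X) (of_int Y) (of_int Z) \<Longrightarrow> X + Y = int q * m \<Longrightarrow> xx x = of_int m"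
proof -
  assume x: "x = pt (of_int X) (of_int Y) (of_int Z)" "X + Y = int q * m"
  have "real_of_int X + real_of_int Y = real q * of_int m"
    using arg_cong[OF x(2), of real_of_int] by simp
  then show ?thesis using x(1) qpos unfolding xx_def by (simp add: field_simps)
qed

lemma cellok_L2: "cellok {A0, A1, PP, C 1}"
proof -
  define Q where "Q = real q"
  have Q: "Q > 0" "1 \<le> Q" using qpos unfolding Q_def by auto
  have d: "distinct [A0, A1, PP, C 1]" by simp
  have bary: "x = (1 - xx x - x$3 + x$2) *\<^sub>R A0 + (xx x - x$2) *\<^sub>R A1 + (x$3 - x$2) *\<^sub>R PP
      + (x$2) *\<^sub>R C 1" for x
    using Q unfolding pts xx_def Q_def[symmetric]
    by (simp add: vec3_eq field_simps)
  show ?thesis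
  proof (rule cell4[OF d])
    show "{A0, A1, PP, C 1} \<subseteq> V" using q1 vert_V by auto
    show "{A0, A1, PP, C 1} \<subseteq> Lam" using vert_Lam by auto
    show "{A0, A1, PP, C 1} \<subseteq> Pset" using q1 vert_Pset by auto
    show "\<exists>ua ub uc ud. ua+ub+uc+ud = 1 \<and> x = ua *\<^sub>R A0 + ub *\<^sub>R A1 + uc *\<^sub>R PP + ud *\<^sub>R C 1" for x
      by (rule exI[of _ "1 - xx x - x$3 + x$2"], rule exI[of _ "xx x - x$2"], rule exI[of _ "x$3 - x$2"],
          rule exI[of _ "x$2"]) (use bary[of x] in \<open>simp add: algebra_simps\<close>)
    show "good {A0, A1, PP, C 1}" by (rule good_L2)
    show "unimod {A0, A1, PP, C 1}"
    proof (rule unimod4[OF d])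
      fix x assume "x \<in> Lam"
      then obtain X Y Z m :: int where x: "x = pt (of_int X) (of_int Y) (of_int Z)" "X + Y = int q * m"
        by (rule Lam_cases)
      have xm: "xx x = of_int m" by (rule xx_Lam[OF x])
      show "\<exists>ia ib ic id::int. ia+ib+ic+id = 1 \<and>
              x = of_int ia *\<^sub>R A0 + of_int ib *\<^sub>R A1 + of_int ic *\<^sub>R PP + of_int id *\<^sub>R C 1"
        apply (rule exI[of _ "1 - m - Z + Y"], rule exI[of _ "m - Y"], rule exI[of _ "Z - Y"],
          rule exI[of _ "Y"])
        using bary[of x] xm x(1) by (simp add: algebra_simps)
    qed
    show "edges {A0, A1, PP, C 1}"
    proof (rule edges4)
      show "edgeok A0 A1" by (rule par[where c="1/2" and wa=A0 and wb=A2]) (use qpos in \<open>auto simp: pts Corners_def vec3_eq\<close>)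
      show "edgeok A0 PP" by (rule par[where c="1/2" and wa=A0 and wb=B0]) (auto simp: pts Corners_def vec3_eq)
      show "edgeok A0 (C 1)" by (rule edge_A0C1)
      show "edgeok A1 PP" by (rule par[where c="1/2" and wa=A2 and wb=B0]) (auto simp: pts Corners_def vec3_eq)
      show "edgeok A1 (C 1)" by (rule edge_A1C1)
      show "edgeok PP (C 1)" by (rule edge_PPC1)
    qed
  qed
qed

lemma cellok_L3: "cellok {A1, PP, C 0, C 1}"
proof -
  define Q where "Q = real q"
  have Q: "Q > 0" "1 \<le> Q" using qpos unfolding Q_def by auto
  have d: "distinct [A1, PP, C 0, C 1]" by simp
  have bary: "x = (1 - x$3) *\<^sub>R A1 + (1 - xx x) *\<^sub>R PP + (xx x + x$3 - x$2 - 1) *\<^sub>R C 0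
      + (x$2) *\<^sub>R C 1" for x
    using Q unfolding pts xx_def Q_def[symmetric]
    by (simp add: vec3_eq field_simps)
  show ?thesis
  proof (rule cell4[OF d])
    show "{A1, PP, C 0, C 1} \<subseteq> V" using q1 vert_V by auto
    show "{A1, PP, C 0, C 1} \<subseteq> Lam" using vert_Lam by auto
    show "{A1, PP, C 0, C 1} \<subseteq> Pset" using q1 vert_Pset by auto
    show "\<exists>ua ub uc ud. ua+ub+uc+ud = 1 \<and> x = ua *\<^sub>R A1 + ub *\<^sub>R PP + uc *\<^sub>R C 0 + ud *\<^sub>R C 1" for x
      by (rule exI[of _ "1 - x$3"], rule exI[of _ "1 - xx x"], rule exI[of _ "xx x + x$3 - x$2 - 1"],
          rule exI[of _ "x$2"]) (use bary[of x] in \<open>simp add: algebra_simps\<close>)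
    show "good {A1, PP, C 0, C 1}" by (rule good_L3)
    show "unimod {A1, PP, C 0, C 1}"
    proof (rule unimod4[OF d])
      fix x assume "x \<in> Lam"
      then obtain X Y Z m :: int where x: "x = pt (of_int X) (of_int Y) (of_int Z)" "X + Y = int q * m"
        by (rule Lam_cases)
      have xm: "xx x = of_int m" by (rule xx_Lam[OF x])
      show "\<exists>ia ib ic id::int. ia+ib+ic+id = 1 \<and>
              x = of_int ia *\<^sub>R A1 + of_int ib *\<^sub>R PP + of_int ic *\<^sub>R C 0 + of_int id *\<^sub>R C 1"
        apply (rule exI[of _ "1 - Z"], rule exI[of _ "1 - m"], rule exI[of _ "m + Z - Y - 1"],
          rule exI[of _ "Y"])
        using bary[of x] xm x(1) by (simp add: algebra_simps)
    qed
    show "edges {A1, PP, C 0, C 1}"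
    proof (rule edges4)
      show "edgeok A1 PP" by (rule par[where c="1/2" and wa=A2 and wb=B0]) (auto simp: pts Corners_def vec3_eq)
      show "edgeok A1 (C 0)" by (rule par[where c="1/2" and wa=A0 and wb=B0]) (auto simp: pts Corners_def vec3_eq)
      show "edgeok A1 (C 1)" by (rule edge_A1C1)
      show "edgeok PP (C 0)" by (rule par[where c="1/2" and wa=A0 and wb=A2]) (use qpos in \<open>auto simp: pts Corners_def vec3_eq\<close>)
      show "edgeok PP (C 1)" by (rule edge_PPC1)
      show "edgeok (C 0) (C 1)" using Q unfolding pts by (intro midp) (simp add: midpoint_pt Hs_def Q_def field_simps)
    qed
  qed
qed

end


lemma affmapI: "linear L \<Longrightarrow> (\<And>x. \<phi> x = c + L x) \<Longrightarrow> affmap \<phi>"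
  unfolding affmap_def by blast

context tri begin

definition "symm \<phi> \<longleftrightarrow> affmap \<phi> \<and> (\<forall>x. \<phi> (\<phi> x) = x) \<and> \<phi> ` Corners \<subseteq> Corners \<and> \<phi> ` V \<subseteq> V \<and>
   (\<forall>v\<in>V. h (\<phi> v) = h v) \<and> (\<forall>x\<in>Lam. \<phi> x \<in> Lam) \<and> (\<forall>x\<in>Hs. \<phi> x \<in> Hs) \<and> (\<forall>x\<in>H. \<phi> x \<in> H)"

lemma Pset_image: "symm \<phi> \<Longrightarrow> \<phi> ` Pset \<subseteq> Pset"
  unfolding symm_def Pset_def by (metis affmap_hull hull_mono)

lemma cellok_image:
  assumes s: "symm \<phi>" and c: "cellok T"
  shows "cellok (\<phi> ` T)"
proof -
  have af: "affmap \<phi>" and inv: "\<And>x. \<phi> (\<phi> x) = x" and cor: "\<phi> ` Corners \<subseteq> Corners"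
    and sV: "\<phi> ` V \<subseteq> V" and hV: "\<And>v. v \<in> V \<Longrightarrow> h (\<phi> v) = h v" and sL: "\<And>x. x \<in> Lam \<Longrightarrow> \<phi> x \<in> Lam"
    and sHs: "\<And>x. x \<in> Hs \<Longrightarrow> \<phi> x \<in> Hs"
    using s unfolding symm_def by auto
  have inj: "inj \<phi>" by (metis inv injI)
  have cT: "finite T" "card T = 4" "T \<subseteq> V" "T \<subseteq> Lam" "affine hull T = UNIV" "convex hull T \<subseteq> Pset"
    "unimod T" "good T" "edges T" using c unfolding cellok_def by auto
  have 1: "finite (\<phi> ` T)" "card (\<phi> ` T) = 4" using cT(1,2) card_image[OF inj_on_subset[OF inj]] by auto
  have 2: "\<phi> ` T \<subseteq> V" "\<phi> ` T \<subseteq> Lam" using cT(3,4) sV sL by auto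
  have 3: "affine hull (\<phi> ` T) = UNIV"
    unfolding affmap_ahull[OF af] cT(5) by (metis inv surjI)
  have 4: "convex hull (\<phi> ` T) \<subseteq> Pset"
    unfolding affmap_hull[OF af] using cT(6) Pset_image[OF s] by blast
  have 5: "unimod (\<phi> ` T)"
    unfolding unimod_def
  proof
    fix x assume "x \<in> Lam"
    then have "\<phi> x \<in> Lam" by (rule sL)
    then obtain c :: "real^3 \<Rightarrow> int" where c: "sum c T = 1" "\<phi> x = (\<Sum>v\<in>T. of_int (c v) *\<^sub>R v)"
      using cT(7) unfolding unimod_def by blast
    have sc: "sum (\<lambda>v. real_of_int (c v)) T = 1" using c(1) by (metis of_int_1 of_int_sum)
    have "x = \<phi> (\<phi> x)" by (simp add: inv)
    also have "\<dots> = (\<Sum>v\<in>T. of_int (c v) *\<^sub>R \<phi> v)" unfolding c(2) by (rule affmap_comb[OF af sc])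
    also have "\<dots> = (\<Sum>w\<in>\<phi> ` T. of_int (c (\<phi> w)) *\<^sub>R w)"
      by (subst sum.reindex[OF inj_on_subset[OF inj]]) (auto simp: inv)
    finally have e1: "x = (\<Sum>w\<in>\<phi> ` T. of_int ((c \<circ> \<phi>) w) *\<^sub>R w)" by simp
    have e2: "sum (c \<circ> \<phi>) (\<phi> ` T) = 1"
      using c(1) by (subst sum.reindex[OF inj_on_subset[OF inj]]) (auto simp: inv)
    show "\<exists>c::real^3\<Rightarrow>int. sum c (\<phi> ` T) = 1 \<and> x = (\<Sum>v\<in>\<phi> ` T. of_int (c v) *\<^sub>R v)"
      using e1 e2 by blast
  qed
  have 6: "good (\<phi> ` T)"
    unfolding good_def
  proof -
    obtain n e where ne: "\<forall>w\<in>T. n \<bullet> w + e = h w" "\<forall>v\<in>V-T. n \<bullet> v + e < h v"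
      using cT(8) unfolding good_def by blast
    obtain n' e' where n': "\<And>x. n \<bullet> \<phi> x + e = n' \<bullet> x + e'" using affmap_inner[OF af] by blast
    have a: "\<forall>w\<in>\<phi> ` T. n' \<bullet> w + e' = h w"
    proof
      fix w assume "w \<in> \<phi> ` T"
      then obtain t where t: "t \<in> T" "w = \<phi> t" by blast
      have "n' \<bullet> w + e' = n \<bullet> \<phi> w + e" using n' by simp
      also have "\<dots> = h t" using ne(1) t inv by simp
      also have "\<dots> = h w" using hV[of t] t cT(3) by auto
      finally show "n' \<bullet> w + e' = h w" .
    qed
    have b: "\<forall>v\<in>V - \<phi> ` T. n' \<bullet> v + e' < h v"
    proof
      fix v assume v: "v \<in> V - \<phi> ` T"
      have "\<phi> v \<in> V" using v sV by blast
      moreover have "\<phi> v \<notin> T"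
      proof
        assume "\<phi> v \<in> T" then have "\<phi> (\<phi> v) \<in> \<phi> ` T" by blast
        then show False using v inv by simp
      qed
      ultimately have "n \<bullet> \<phi> v + e < h (\<phi> v)" using ne(2) by blast
      then show "n' \<bullet> v + e' < h v" using n'[of v] hV[of v] v by simp
    qed
    show "\<exists>n e. (\<forall>w\<in>\<phi> ` T. n \<bullet> w + e = h w) \<and> (\<forall>v\<in>V - \<phi> ` T. n \<bullet> v + e < h v)"
      using a b by blast
  qed
  have 7: "edges (\<phi> ` T)"
    unfolding edges_def
  proof (intro ballI impI)
    fix u' v' assume uv: "u' \<in> \<phi> ` T" "v' \<in> \<phi> ` T" "u' \<noteq> v'"
    then obtain u v where u: "u \<in> T" "u' = \<phi> u" and v: "v \<in> T" "v' = \<phi> v" by blast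
    have "u \<noteq> v" using uv(3) u(2) v(2) by auto
    then have "edgeok u v" using cT(9) u v unfolding edges_def by blast
    then show "edgeok u' v'" unfolding edgeok_def
    proof (elim disjE bexE conjE exE)
      assume "midpoint u v \<in> Hs"
      then have "\<phi> (midpoint u v) \<in> Hs" by (rule sHs)
      then show "midpoint u' v' \<in> Hs \<or> (\<exists>w1\<in>Corners. \<exists>w2\<in>Corners. w1 \<noteq> w2 \<and> (\<exists>c. v' - u' = c *\<^sub>R (w2 - w1)))"
        using affmap_midpoint[OF af] u v by simp
    next
      fix w1 w2 c assume w: "w1 \<in> Corners" "w2 \<in> Corners" "w1 \<noteq> w2" "v - u = c *\<^sub>R (w2 - w1)"
      have "v' - u' = c *\<^sub>R (\<phi> w2 - \<phi> w1)" using affmap_diff[OF af w(4)] u v by simp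
      moreover have "\<phi> w1 \<in> Corners" "\<phi> w2 \<in> Corners" using w cor by auto
      moreover have "\<phi> w1 \<noteq> \<phi> w2" using w(3) inj by (auto dest: injD)
      ultimately show "midpoint u' v' \<in> Hs \<or> (\<exists>w1\<in>Corners. \<exists>w2\<in>Corners. w1 \<noteq> w2 \<and> (\<exists>c. v' - u' = c *\<^sub>R (w2 - w1)))"
        by blast
    qed
  qed
  show ?thesis unfolding cellok_def using 1 2 3 4 5 6 7 by blast
qed

end


context tri begin

definition sg :: "real^3 \<Rightarrow> real^3" where "sg p = pt (p$2) (p$1) (2 - p$3)"
definition sx :: "real^3 \<Rightarrow> real^3" where "sx p = pt (2 * real q - p$1 - real q * p$3) (real q * p$3 - p$2) (p$3)"
definition tu :: "real^3 \<Rightarrow> real^3" where "tu p = pt (real q * p$3 - p$2) (p$2) ((p$1 + p$2) / real q)"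

lemma symm_id: "symm id"
  unfolding symm_def by (simp add: affmap_id)

lemma h_C: "i \<le> q \<Longrightarrow> h (C (q - i)) = h (C i)"
  by (simp add: of_nat_diff algebra_simps)

lemma symm_sg: "symm sg"
proof -
  have tab: "sg A0 = B0" "sg A1 = B1" "sg A2 = B2" "sg PP = PP" "sg RR = RR" "sg B0 = A0" "sg B1 = A1" "sg B2 = A2"
    "i \<le> q \<Longrightarrow> sg (C i) = C (q - i)" for i
    by (simp_all add: sg_def pts of_nat_diff)
  have af: "affmap sg"
    by (rule affmapI[where L="\<lambda>p. pt (p$2) (p$1) (- p$3)" and c="pt 0 0 2"])
       (auto simp: linear_iff vec3_eq sg_def)
  have inv: "\<forall>x. sg (sg x) = x" by (simp add: sg_def vec3_eq)
  have cor: "sg ` Corners \<subseteq> Corners" unfolding Corners_def using tab by auto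
  have sV: "\<forall>v\<in>V. sg v \<in> V \<and> h (sg v) = h v"
  proof
    fix v assume "v \<in> V"
    then show "sg v \<in> V \<and> h (sg v) = h v"
      by (cases rule: V_cases) (auto simp: tab vert_V of_nat_diff algebra_simps)
  qed
  have sL: "\<forall>x\<in>Lam. sg x \<in> Lam"
  proof
    fix x assume "x \<in> Lam"
    then obtain X Y Z m :: int where x: "x = pt (of_int X) (of_int Y) (of_int Z)" "X + Y = int q * m"
      by (rule Lam_cases)
    show "sg x \<in> Lam" by (rule Lam_I[of Y X _ "2 - Z"]) (use x in \<open>simp_all add: sg_def algebra_simps\<close>)
  qed
  have sHs: "\<forall>x\<in>Hs. sg x \<in> Hs" unfolding Hs_def sg_def by (auto simp: algebra_simps)
  have sH: "\<forall>x\<in>H. sg x \<in> H" unfolding H_def sg_def by (auto simp: algebra_simps)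
  show ?thesis unfolding symm_def using af inv cor sV sL sHs sH by blast
qed

lemma symm_sx: "symm sx"
proof -
  have tab: "sx A0 = A2" "sx A1 = A1" "sx A2 = A0" "sx PP = RR" "sx RR = PP" "sx B0 = B2" "sx B1 = B1" "sx B2 = B0"
    "i \<le> q \<Longrightarrow> sx (C i) = C (q - i)" for i
    by (simp_all add: sx_def pts of_nat_diff)
  have af: "affmap sx"
    by (rule affmapI[where L="\<lambda>p. pt (- p$1 - real q * p$3) (real q * p$3 - p$2) (p$3)" and c="pt (2 * real q) 0 0"])
       (auto simp: linear_iff vec3_eq sx_def algebra_simps)
  have inv: "\<forall>x. sx (sx x) = x" by (simp add: sx_def vec3_eq)
  have cor: "sx ` Corners \<subseteq> Corners" unfolding Corners_def using tab by auto
  have sV: "\<forall>v\<in>V. sx v \<in> V \<and> h (sx v) = h v"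
  proof
    fix v assume "v \<in> V"
    then show "sx v \<in> V \<and> h (sx v) = h v"
      by (cases rule: V_cases) (auto simp: tab vert_V of_nat_diff algebra_simps)
  qed
  have sL: "\<forall>x\<in>Lam. sx x \<in> Lam"
  proof
    fix x assume "x \<in> Lam"
    then obtain X Y Z m :: int where x: "x = pt (of_int X) (of_int Y) (of_int Z)" "X + Y = int q * m"
      by (rule Lam_cases)
    have "(2 * int q - X - int q * Z) + (int q * Z - Y) = int q * (2 - m)" using x(2) by (simp add: algebra_simps)
    then show "sx x \<in> Lam"
      by (intro Lam_I[of "2 * int q - X - int q * Z" "int q * Z - Y" _ Z]) (use x in \<open>simp_all add: sx_def\<close>)
  qed
  have sHs: "\<forall>x\<in>Hs. sx x \<in> Hs" unfolding Hs_def sx_def by (auto simp: algebra_simps)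
  have sH: "\<forall>x\<in>H. sx x \<in> H" unfolding H_def sx_def by (auto simp: algebra_simps)
  show ?thesis unfolding symm_def using af inv cor sV sL sHs sH by blast
qed

lemma symm_tu: "symm tu"
proof -
  have Q: "real q > 0" using qpos by simp
  have tab: "tu A0 = A0" "tu A1 = PP" "tu A2 = B0" "tu PP = A1" "tu RR = B1" "tu B0 = A2" "tu B1 = RR" "tu B2 = B2"
    "tu (C i) = C i" for i
    using Q by (simp_all add: tu_def pts)
  have af: "affmap tu"
    by (rule affmapI[where L="tu" and c="0"])
       (use Q in \<open>auto simp: linear_iff vec3_eq tu_def algebra_simps add_divide_distrib\<close>)
  have inv: "\<forall>x. tu (tu x) = x" using Q by (simp add: tu_def vec3_eq)
  have cor: "tu ` Corners \<subseteq> Corners" unfolding Corners_def using tab by auto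
  have sV: "\<forall>v\<in>V. tu v \<in> V \<and> h (tu v) = h v"
  proof
    fix v assume "v \<in> V"
    then show "tu v \<in> V \<and> h (tu v) = h v"
      by (cases rule: V_cases) (auto simp: tab vert_V)
  qed
  have sL: "\<forall>x\<in>Lam. tu x \<in> Lam"
  proof
    fix x assume "x \<in> Lam"
    then obtain X Y Z m :: int where x: "x = pt (of_int X) (of_int Y) (of_int Z)" "X + Y = int q * m"
      by (rule Lam_cases)
    have xm: "xx x = of_int m" by (rule xx_Lam[OF x])
    have "tu x = pt (of_int (int q * Z - Y)) (of_int Y) (of_int m)"
      using xm x(1) unfolding xx_def tu_def by simp
    then show "tu x \<in> Lam"
      by (intro Lam_I[of "int q * Z - Y" Y _ m]) simp_all
  qed
  have qd: "\<And>a. real q * (a / real q) = a" using Q by simp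
  have sHs: "\<forall>x\<in>Hs. tu x \<in> Hs" unfolding Hs_def tu_def using qd by auto
  have sH: "\<forall>x\<in>H. tu x \<in> H" unfolding H_def tu_def using qd by auto
  show ?thesis unfolding symm_def using af inv cor sV sL sHs sH by blast
qed

end


context tri begin

definition "Base = (\<lambda>j. {A0, PP, C j, C (j+1)}) ` {1..<q} \<union> {{A0, A1, PP, C 1}, {A1, PP, C 0, C 1}}"
definition "Cells = (\<lambda>(a,b,c,T). a ` (b ` (c ` T))) ` ({id, sg} \<times> {id, sx} \<times> {id, tu} \<times> Base)"

lemma base_ok: "T \<in> Base \<Longrightarrow> cellok T"
  unfolding Base_def using cellok_L1 cellok_L2 cellok_L3 by auto

lemma cells_ok: "T \<in> Cells \<Longrightarrow> cellok T"
proof -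
  assume "T \<in> Cells"
  then obtain a b c T0 where T: "T = a ` (b ` (c ` T0))" "a \<in> {id, sg}" "b \<in> {id, sx}" "c \<in> {id, tu}" "T0 \<in> Base"
    unfolding Cells_def by auto
  have sa: "symm a" "symm b" "symm c" using T(2-4) symm_id symm_sg symm_sx symm_tu by auto
  show "cellok T" unfolding T(1) by (intro cellok_image sa base_ok T(5))
qed

lemma finite_Cells: "finite Cells" unfolding Cells_def Base_def by auto

lemma Cells_ne: "Cells \<noteq> {}" unfolding Cells_def Base_def by auto

lemma exj:
  assumes "0 < x" "x < Y" "Y \<le> real q * x"
  shows "\<exists>j. 1 \<le> j \<and> j < q \<and> real j * x \<le> Y \<and> Y \<le> (real j + 1) * x"
proof -
  define t where "t = Y / x"
  have t: "1 < t" "t \<le> real q" using assms unfolding t_def by (auto simp: field_simps)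
  define k where "k = \<lceil>t\<rceil>"
  have k: "real_of_int k - 1 < t" "t \<le> real_of_int k" unfolding k_def by linarith+
  have k2: "2 \<le> k" using t k by linarith
  have kq: "k \<le> int q" unfolding k_def using t(2) by (simp add: ceiling_le_iff)
  define j where "j = nat (k - 1)"
  have j: "real j = real_of_int k - 1" "1 \<le> j" "j < q" unfolding j_def using k2 kq by auto
  have "real j \<le> t" "t \<le> real j + 1" using j(1) k by auto
  then have "real j * x \<le> Y" "Y \<le> (real j + 1) * x" using assms(1) unfolding t_def by (auto simp: field_simps)
  then show ?thesis using j by blast
qed

lemma locate:
  assumes p: "p \<in> H" "p$1 + p$2 \<le> real q * p$3" "p$3 \<le> 1"
  shows "\<exists>T\<in>Base. p \<in> convex hull T"
proof -
  define Q where "Q = real q"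
  have Q: "Q > 0" using qpos unfolding Q_def by auto
  define x where "x = xx p"
  have P: "0 \<le> p$1" "0 \<le> p$2" "p$2 \<le> Q * p$3" "p$1 + Q * p$3 \<le> 2 * Q" using p(1) unfolding H_def Q_def by auto
  have xZ: "x \<le> p$3" using p(2) Q unfolding x_def xx_def Q_def[symmetric] by (simp add: field_simps)
  have x0: "0 \<le> x" using P Q unfolding x_def xx_def Q_def[symmetric] by simp
  have QZ: "Q * p$3 \<le> Q" using mult_left_mono[OF p(3), of Q] Q by simp
  have XY: "p$1 + p$2 \<le> Q" using QZ p(2) unfolding Q_def by linarith
  have Yx: "p$2 \<le> Q * x" using P Q unfolding x_def xx_def Q_def[symmetric] by simp
  show ?thesis
  proof (cases "p$2 \<le> x")
    case True
    show ?thesis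
    proof (cases "x - p$2 \<le> 1 - p$3")
      case True
      have d: "distinct [A0, A1, PP, C 1]" by simp
      have YZ: "p$2 \<le> p$3" using \<open>p$2 \<le> x\<close> xZ by linarith
      have "p \<in> convex hull {A0, A1, PP, C 1}"
        apply (rule in_hull4[OF d, of "1 - x - p$3 + p$2" "x - p$2" "p$3 - p$2" "p$2"])
        using True \<open>p$2 \<le> x\<close> xZ YZ P Q unfolding pts x_def xx_def Q_def[symmetric]
        by (simp_all add: vec3_eq field_simps)
      then show ?thesis unfolding Base_def by blast
    next
      case False
      have d: "distinct [A1, PP, C 0, C 1]" by simp
      have "p \<in> convex hull {A1, PP, C 0, C 1}"
        apply (rule in_hull4[OF d, of "1 - p$3" "1 - x" "x + p$3 - p$2 - 1" "p$2"])
        using False \<open>p$2 \<le> x\<close> xZ P Q p(3) XY unfolding pts x_def xx_def Q_def[symmetric]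
        by (simp_all add: vec3_eq field_simps)
      then show ?thesis unfolding Base_def by blast
    qed
  next
    case False
    have xp: "0 < x" using False Yx Q x0 by (cases "x = 0") auto
    obtain j where j: "1 \<le> j" "j < q" "real j * x \<le> p$2" "p$2 \<le> (real j + 1) * x"
      using exj[OF xp _ Yx[unfolded Q_def]] False by auto
    have d: "distinct [A0, PP, C j, C (j+1)]" by simp
    have "p \<in> convex hull {A0, PP, C j, C (j+1)}"
      apply (rule in_hull4[OF d, of "1 - p$3" "p$3 - x" "(real j + 1) * x - p$2" "p$2 - real j * x"])
      using j xZ P Q p(3) unfolding pts x_def xx_def Q_def[symmetric]
      by (simp_all add: vec3_eq field_simps)
    then show ?thesis unfolding Base_def using j by auto
  qed
qed

end


context tri begin

lemma symm_H: "symm \<phi> \<Longrightarrow> x \<in> H \<Longrightarrow> \<phi> x \<in> H" unfolding symm_def by blast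
lemma symm_inv: "symm \<phi> \<Longrightarrow> \<phi> (\<phi> x) = x" unfolding symm_def by blast

lemma reduce:
  assumes p: "p \<in> H"
  obtains a b c p3 where "a \<in> {id,sg}" "b \<in> {id,sx}" "c \<in> {id,tu}" "p = a (b (c p3))" "p3 \<in> H"
           "p3$1 + p3$2 \<le> real q * p3$3" "p3$3 \<le> 1"
proof -
  have Q: "real q > 0" using qpos by simp
  define a where "a = (if p$3 \<le> 1 then id else sg)"
  have a: "a \<in> {id, sg}" "symm a" unfolding a_def using symm_id symm_sg by auto
  define p1 where "p1 = a p"
  have p1: "p1 \<in> H" "p1$3 \<le> 1" "p = a p1"
    using symm_H[OF a(2) p] symm_inv[OF a(2)] unfolding p1_def a_def by (auto simp: sg_def)
  define b where "b = (if p1$1 + p1$2 \<le> real q then id else sx)"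
  have b: "b \<in> {id, sx}" "symm b" unfolding b_def using symm_id symm_sx by auto
  define p2 where "p2 = b p1"
  have p2: "p2 \<in> H" "p2$3 \<le> 1" "p2$1 + p2$2 \<le> real q" "p1 = b p2"
    using symm_H[OF b(2) p1(1)] symm_inv[OF b(2)] p1(2) unfolding p2_def b_def by (auto simp: sx_def)
  define c where "c = (if p2$1 + p2$2 \<le> real q * p2$3 then id else tu)"
  have c: "c \<in> {id, tu}" "symm c" unfolding c_def using symm_id symm_tu by auto
  define p3 where "p3 = c p2"
  have p3: "p3 \<in> H" "p2 = c p3" using symm_H[OF c(2) p2(1)] symm_inv[OF c(2)] unfolding p3_def by auto
  have p3c: "p3$1 + p3$2 \<le> real q * p3$3 \<and> p3$3 \<le> 1"
  proof (cases "p2$1 + p2$2 \<le> real q * p2$3")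
    case True then show ?thesis using p2 unfolding p3_def c_def by simp
  next
    case False
    have "p3 = tu p2" unfolding p3_def c_def using False by simp
    have e: "real q * ((p2$1 + p2$2)/real q) = p2$1 + p2$2" using Q by simp
    have e2: "(p2$1 + p2$2)/real q \<le> 1" using p2(3) Q by (simp add: divide_le_eq_1_pos)
    show ?thesis using False e e2 unfolding \<open>p3 = tu p2\<close> tu_def by simp
  qed
  have "p = a (b (c p3))" using p1(3) p2(4) p3(2) by simp
  then show ?thesis using that[OF a(1) b(1) c(1)] p3(1) p3c by blast
qed

lemma cover: "H \<subseteq> \<Union> ((\<lambda>T. convex hull T) ` Cells)"
proof
  fix p assume "p \<in> H"
  then obtain a b c p3 where abc: "a \<in> {id,sg}" "b \<in> {id,sx}" "c \<in> {id,tu}" "p = a (b (c p3))"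
    "p3 \<in> H" "p3$1 + p3$2 \<le> real q * p3$3" "p3$3 \<le> 1"
    using reduce[OF \<open>p \<in> H\<close>] by metis
  obtain T where T: "T \<in> Base" "p3 \<in> convex hull T" using locate abc(5-7) by blast
  have sy: "symm a" "symm b" "symm c" using abc(1-3) symm_id symm_sg symm_sx symm_tu by auto
  have af: "affmap a" "affmap b" "affmap c" using sy unfolding symm_def by blast+
  have "p \<in> a ` (b ` (c ` (convex hull T)))" using abc(4) T(2) by blast
  also have "\<dots> = convex hull (a ` (b ` (c ` T)))"
    unfolding affmap_hull[OF af(1)] affmap_hull[OF af(2)] affmap_hull[OF af(3)] ..
  finally have "p \<in> convex hull (a ` (b ` (c ` T)))" .
  moreover have "a ` (b ` (c ` T)) \<in> Cells" unfolding Cells_def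
    by (rule image_eqI[where x="(a,b,c,T)"]) (use abc(1-3) T(1) in simp_all)
  ultimately show "p \<in> \<Union> ((\<lambda>T. convex hull T) ` Cells)" by blast
qed

lemma union_eq: "\<Union> ((\<lambda>T. convex hull T) ` Cells) = Pset"
proof
  have "convex hull T \<subseteq> Pset" if "T \<in> Cells" for T using cells_ok[OF that] unfolding cellok_def by simp
  then show "\<Union> ((\<lambda>T. convex hull T) ` Cells) \<subseteq> Pset" by blast
  show "Pset \<subseteq> \<Union> ((\<lambda>T. convex hull T) ` Cells)" using Pset_H cover by blast
qed

lemma H_Pset: "H \<subseteq> Pset" using cover union_eq by blast

lemma Hs_interior: "Hs \<subseteq> interior Pset"
  by (rule interior_maximal) (use H_Pset open_Hs in \<open>auto simp: Hs_def H_def\<close>)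

lemma Corners_DV: "w \<in> Corners \<Longrightarrow> \<exists>d\<in>DeltaVerts q. w = 2 *\<^sub>R d"
  unfolding Corners_def DeltaVerts_def pts by (auto simp: scaleR_pt)

lemma main:
  "lattice_triangulation Lam Pset Cells \<and> (\<forall>T\<in>Cells. unimodular Lam T) \<and>
   regular_triangulation Pset Cells \<and> standard_boundary (DeltaVerts q) Pset Cells"
proof -
  have ok: "\<And>T. T \<in> Cells \<Longrightarrow> finite T \<and> card T = 4 \<and> T \<subseteq> V \<and> T \<subseteq> Lam \<and> affine hull T = UNIV \<and>
      unimod T \<and> good T \<and> edges T"
    using cells_ok unfolding cellok_def by blast
  have ind: "\<And>T. T \<in> Cells \<Longrightarrow> \<not> affine_dependent T" using ok indep_of_hull by blast
  have gl: "(\<forall>T\<in>Cells. \<forall>T'\<in>Cells. convex hull T \<inter> convex hull T' = convex hull (T \<inter> T'))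
      \<and> regular_triangulation Pset Cells"
    by (rule GL[OF finite_Cells Cells_ne _ _ convex_Pset, of V h])
       (use ok in \<open>auto simp: good_def\<close>)
  have lt: "lattice_triangulation Lam Pset Cells"
    unfolding lattice_triangulation_def using finite_Cells ok ind union_eq gl by blast
  have um: "\<forall>T\<in>Cells. unimodular Lam T"
    unfolding unimodular_def using ok ind unfolding unimod_def by blast
  have sb: "standard_boundary (DeltaVerts q) Pset Cells"
    unfolding standard_boundary_def
  proof (intro ballI impI)
    fix T u v assume T: "T \<in> Cells" "u \<in> T" "v \<in> T" and uv: "u \<noteq> v \<and> closed_segment u v \<subseteq> frontier Pset"
    have "edgeok u v" using ok[OF T(1)] T uv unfolding edges_def by blast
    then show "\<exists>w1\<in>DeltaVerts q. \<exists>w2\<in>DeltaVerts q. w1 \<noteq> w2 \<and> (\<exists>c. v - u = c *\<^sub>R (w2 - w1))"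
      unfolding edgeok_def
    proof (elim disjE bexE conjE exE)
      assume m: "midpoint u v \<in> Hs"
      have "midpoint u v \<in> frontier Pset" using uv midpoint_in_closed_segment by blast
      moreover have "midpoint u v \<in> interior Pset" using m Hs_interior by blast
      ultimately show ?thesis unfolding frontier_def by blast
    next
      fix w1 w2 c assume w: "w1 \<in> Corners" "w2 \<in> Corners" "w1 \<noteq> w2" "v - u = c *\<^sub>R (w2 - w1)"
      obtain d1 where d1: "d1 \<in> DeltaVerts q" "w1 = 2 *\<^sub>R d1" using Corners_DV[OF w(1)] by blast
      obtain d2 where d2: "d2 \<in> DeltaVerts q" "w2 = 2 *\<^sub>R d2" using Corners_DV[OF w(2)] by blast
      have "d1 \<noteq> d2" using w(3) d1 d2 by auto
      moreover have "v - u = (c * 2) *\<^sub>R (d2 - d1)" using w(4) d1 d2 by (simp add: scaleR_diff_right)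
      ultimately show ?thesis using d1 d2 by blast
    qed
  qed
  show ?thesis using lt um gl sb by blast
qed

end

theorem proposition3p6:
  fixes q :: nat
  assumes "q \<ge> 1"
  shows "\<exists>\<T>. lattice_triangulation (Lambda1 q) ((\<lambda>x. 2 *\<^sub>R x) ` Delta' q) \<T> \<and>
             (\<forall>T\<in>\<T>. unimodular (Lambda1 q) T) \<and>
             regular_triangulation ((\<lambda>x. 2 *\<^sub>R x) ` Delta' q) \<T> \<and>
             standard_boundary (DeltaVerts q) ((\<lambda>x. 2 *\<^sub>R x) ` Delta' q) \<T>"
proof -
  interpret tri q using assms by unfold_locales
  show ?thesis using main unfolding Pset_eq Lam_def by blast
qed


end
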